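(* Let $Y$ be a finite set (and $X$ a finite set), $\rho\in(0,1/2)$, $\delta_2\in(0,1/2)$, $\gamma>0$. Every deterministic protocol for $\textsc{Agree}_{\delta_2,\gamma}(\mathcal D_\rho)$ yields (by interpreting Alice's and Bob's input strings $r,s\in\{0,1\}^{|Y|}$ as the truth tables of $f',g':Y\to\{0,1\}$) a deterministic protocol, with the same communication, for $\textsc{Agreement-Distillation}^k_{\gamma,\rho}$ on strings of length $|Y|$, where $k=(1-h(\delta_2))|Y|$ and $h(x)=-x\log x-(1-x)\log(1-x)$ is the binary entropy function.
   Context: For Boolean functions on $X\times Y$, $\delta(f,g)$ is the fraction of $(x,y)\in X\times Y$ with $f(x,y)\ne g(x,y)$. $\mathcal F_B$ is the set of functions $f:X\times Y\to\{0,1\}$ of the form $f(x,y)=f'(y)$ for some $f':Y\to\{0,1\}$. $\mathcal D_\rho$ is the distribution on pairs $(f,g)$ obtained by drawing $f$ uniformly from $\mathcal F_B$ and setting $g(x,y)=g'(y)$ where independently for each $y\in Y$, $g'(y)=f'(y)$ with probability $1-\rho$ and $g'(y)=1-f'(y)$ with probability $\rho$. $\textsc{Agree}_{\delta_2,\gamma}(\mathcal D_\rho)$: Alice gets $f$, Bob gets $g$ with $(f,g)\sim\mathcal D_\rho$; Alice outputs $q_A$, Bob outputs $q_B$ with always $\delta(q_A,f)\le\delta_2$, $\delta(q_B,g)\le\delta_2$, and $\Pr[q_A=q_B]\ge\gamma$ over the input distribution. A pair $(r,s)\in\{0,1\}^m\times\{0,1\}^m$ is $\rho$-perturbed if the pairs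 $(r_i,s_i)$ are independent, each $r_i$ uniform and $s_i=r_i$ with probability $1-\rho$, $s_i\ne r_i$ with probability $\rho$. $\textsc{Agreement-Distillation}^k_{\gamma,\rho}$: Alice gets $r$ and Bob gets $s$ with $(r,s)$ $\rho$-perturbed; they communicate deterministically and output $w_A$, $w_B$ such that $H_\infty(w_A),H_\infty(w_B)\ge k$ and $\Pr[w_A=w_B]\ge\gamma$, where $H_\infty(W)=\min_{w\in\mathrm{supp}(W)}(-\log\Pr[W=w])$. Logs base 2. *)

theory Defs
  imports "HOL-Probability.Probability"
begin

text \<open>At a leaf, Alice's and
Bob's outputs depend only on their own input (and, implicitly, on the transcript,
i.e. the position of the leaf).\<close>

datatype ('a, 'b, 'o) protocol =
    Leaf "'a \<Rightarrow> 'o" "'b \<Rightarrow> 'o"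
  | SendA "'a \<Rightarrow> bool" "('a, 'b, 'o) protocol" "('a, 'b, 'o) protocol"
  | SendB "'b \<Rightarrow> bool" "('a, 'b, 'o) protocol" "('a, 'b, 'o) protocol"

fun run :: "('a, 'b, 'o) protocol \<Rightarrow> 'a \<Rightarrow> 'b \<Rightarrow> 'o \<times> 'o" where
  "run (Leaf oa ob) a b = (oa a, ob b)"
| "run (SendA m p0 p1) a b = run (if m a then p1 else p0) a b"
| "run (SendB m p0 p1) a b = run (if m b then p1 else p0) a b"

fun comm :: "('a, 'b, 'o) protocol \<Rightarrow> nat" where
  "comm (Leaf oa ob) = 0"
| "comm (SendA m p0 p1) = Suc (max (comm p0) (comm p1))"
| "comm (SendB m p0 p1) = Suc (max (comm p0) (comm p1))"

definition frac_dist :: "('c::finite \<Rightarrow> bool) \<Rightarrow> ('c \<Rightarrow> bool) \<Rightarrow> real" where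
  "frac_dist f g = real (card {z. f z \<noteq> g z}) / real (card (UNIV :: 'c set))"

definition corr_bit :: "real \<Rightarrow> (bool \<times> bool) pmf" where
  "corr_bit \<rho> = do { b \<leftarrow> bernoulli_pmf (1/2); flip \<leftarrow> bernoulli_pmf \<rho>;
                      return_pmf (b, b \<noteq> flip) }"

definition D_rho :: "real \<Rightarrow> (('x::finite \<times> 'y::finite \<Rightarrow> bool) \<times> ('x \<times> 'y \<Rightarrow> bool)) pmf" where
  "D_rho \<rho> = map_pmf (\<lambda>h. (\<lambda>(x, y). fst (h y), \<lambda>(x, y). snd (h y)))
                (Pi_pmf (UNIV :: 'y set) undefined (\<lambda>_. corr_bit \<rho>))"

definition perturbed :: "real \<Rightarrow> nat \<Rightarrow> (bool list \<times> bool list) pmf" where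
  "perturbed \<rho> m = map_pmf (\<lambda>h. (map (\<lambda>i. fst (h i)) [0..<m], map (\<lambda>i. snd (h i)) [0..<m]))
                (Pi_pmf {..<m} undefined (\<lambda>_. corr_bit \<rho>))"

definition min_entropy :: "'a pmf \<Rightarrow> real" where
  "min_entropy p = (INF w \<in> set_pmf p. - log 2 (pmf p w))"

definition bin_entropy :: "real \<Rightarrow> real" where
  "bin_entropy x = - x * log 2 x - (1 - x) * log 2 (1 - x)"

definition solves_Agree ::
  "real \<Rightarrow> real \<Rightarrow> real \<Rightarrow>
   ('x::finite \<times> 'y::finite \<Rightarrow> bool, 'x \<times> 'y \<Rightarrow> bool, 'x \<times> 'y \<Rightarrow> bool) protocol \<Rightarrow> bool" where
  "solves_Agree \<delta>2 \<gamma> \<rho> P \<longleftrightarrow>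
     (\<forall>(f, g) \<in> set_pmf (D_rho \<rho>).
        frac_dist (fst (run P f g)) f \<le> \<delta>2 \<and> frac_dist (snd (run P f g)) g \<le> \<delta>2) \<and>
     measure_pmf.prob (D_rho \<rho>) {(f, g). fst (run P f g) = snd (run P f g)} \<ge> \<gamma>"

definition solves_AD ::
  "nat \<Rightarrow> real \<Rightarrow> real \<Rightarrow> real \<Rightarrow> (bool list, bool list, 'o) protocol \<Rightarrow> bool" where
  "solves_AD m k \<gamma> \<rho> P \<longleftrightarrow>
     min_entropy (map_pmf (\<lambda>(r, s). fst (run P r s)) (perturbed \<rho> m)) \<ge> k \<and>
     min_entropy (map_pmf (\<lambda>(r, s). snd (run P r s)) (perturbed \<rho> m)) \<ge> k \<and>
     measure_pmf.prob (perturbed \<rho> m) {(r, s). fst (run P r s) = snd (run P r s)} \<ge> \<gamma>"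

end

theory Submission
  imports Defs
begin

fun pmap :: "('a \<Rightarrow> 'c) \<Rightarrow> ('b \<Rightarrow> 'd) \<Rightarrow> ('c,'d,'o) protocol \<Rightarrow> ('a,'b,'o) protocol" where
  "pmap ca cb (Leaf oa ob) = Leaf (oa \<circ> ca) (ob \<circ> cb)"
| "pmap ca cb (SendA mm p0 p1) = SendA (mm \<circ> ca) (pmap ca cb p0) (pmap ca cb p1)"
| "pmap ca cb (SendB mm p0 p1) = SendB (mm \<circ> cb) (pmap ca cb p0) (pmap ca cb p1)"

lemma run_pmap: "run (pmap ca cb p) a b = run p (ca a) (cb b)"
  by (induction p) auto

lemma comm_pmap: "comm (pmap ca cb p) = comm p"
  by (induction p) auto

lemma corr_fst: "map_pmf fst (corr_bit \<rho>) = bernoulli_pmf (1/2)"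
  unfolding corr_bit_def by (simp add: map_bind_pmf bind_pmf_const bind_return_pmf' )

lemma corr_snd: "map_pmf snd (corr_bit \<rho>) = bernoulli_pmf (1/2)"
proof -
  have "map_pmf snd (corr_bit \<rho>) = bernoulli_pmf (1/2) \<bind> (\<lambda>b. bernoulli_pmf \<rho> \<bind> (\<lambda>fl. return_pmf (b \<noteq> fl)))"
    unfolding corr_bit_def by (simp add: map_bind_pmf)
  also have "\<dots> = bernoulli_pmf \<rho> \<bind> (\<lambda>fl. bernoulli_pmf (1/2) \<bind> (\<lambda>b. return_pmf (b \<noteq> fl)))"
    by (rule bind_commute_pmf)
  also have "\<dots> = bernoulli_pmf \<rho> \<bind> (\<lambda>fl. bernoulli_pmf (1/2))"
  proof -
    have "bernoulli_pmf (1/2) \<bind> (\<lambda>b. return_pmf (b \<noteq> fl)) = bernoulli_pmf (1/2)" for fl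
    proof (rule pmf_eqI)
      fix i
      have "bernoulli_pmf (1/2) \<bind> (\<lambda>b. return_pmf (b \<noteq> fl)) = map_pmf (\<lambda>b. b \<noteq> fl) (bernoulli_pmf (1/2))"
        by (simp add: map_pmf_def)
      moreover have "pmf (map_pmf (\<lambda>b. b \<noteq> fl) (bernoulli_pmf (1/2))) i = pmf (bernoulli_pmf (1/2)) (i \<noteq> fl)"
      proof -
        have inj: "inj (\<lambda>b. b \<noteq> fl)" by (auto simp: inj_def)
        have "pmf (map_pmf (\<lambda>b. b \<noteq> fl) (bernoulli_pmf (1/2))) ((\<lambda>b. b \<noteq> fl) (i \<noteq> fl)) = pmf (bernoulli_pmf (1/2)) (i \<noteq> fl)"
          by (rule pmf_map_inj'[OF inj])
        moreover have "(\<lambda>b. b \<noteq> fl) (i \<noteq> fl) = i" by auto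
        ultimately show ?thesis by simp
      qed
      ultimately show "pmf (bernoulli_pmf (1/2) \<bind> (\<lambda>b. return_pmf (b \<noteq> fl))) i = pmf (bernoulli_pmf (1/2)) i"
        by (simp add: pmf_bernoulli_half)
    qed
    then show ?thesis by simp
  qed
  finally show ?thesis by (simp add: bind_pmf_const)
qed

lemma marg_fst:
  "map_pmf fst (D_rho \<rho> :: (('x::finite \<times> 'y::finite \<Rightarrow> bool) \<times> _) pmf) =
   map_pmf (\<lambda>h. \<lambda>(x,y). h y) (Pi_pmf (UNIV :: 'y set) (fst (undefined :: bool \<times> bool)) (\<lambda>_. bernoulli_pmf (1/2)))"
proof -
  have "Pi_pmf (UNIV :: 'y set) (fst (undefined :: bool \<times> bool)) (\<lambda>_. map_pmf fst (corr_bit \<rho>)) =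
        map_pmf (\<lambda>h. fst \<circ> h) (Pi_pmf UNIV undefined (\<lambda>_. corr_bit \<rho>))"
    by (rule Pi_pmf_map) auto
  then show ?thesis unfolding D_rho_def corr_fst
    by (simp add: pmf.map_comp o_def)
qed

lemma marg_snd:
  "map_pmf snd (D_rho \<rho> :: (('x::finite \<times> 'y::finite \<Rightarrow> bool) \<times> _) pmf) =
   map_pmf (\<lambda>h. \<lambda>(x,y). h y) (Pi_pmf (UNIV :: 'y set) (snd (undefined :: bool \<times> bool)) (\<lambda>_. bernoulli_pmf (1/2)))"
proof -
  have "Pi_pmf (UNIV :: 'y set) (snd (undefined :: bool \<times> bool)) (\<lambda>_. map_pmf snd (corr_bit \<rho>)) =
        map_pmf (\<lambda>h. snd \<circ> h) (Pi_pmf UNIV undefined (\<lambda>_. corr_bit \<rho>))"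
    by (rule Pi_pmf_map) auto
  then show ?thesis unfolding D_rho_def corr_snd
    by (simp add: pmf.map_comp o_def)
qed

lemma perturbed_D:
  fixes idx :: "'y::finite \<Rightarrow> nat"
  assumes bij: "bij_betw idx UNIV {..<CARD('y)}"
  shows "map_pmf (\<lambda>(r,s). ((\<lambda>(x::'x::finite,y). r ! idx y), (\<lambda>(x::'x,y). s ! idx y))) (perturbed \<rho> CARD('y))
     = D_rho \<rho>"
proof -
  have lt: "idx y < CARD('y)" for y using bij by (auto simp: bij_betw_def)
  have "Pi_pmf (UNIV :: 'y set) undefined (\<lambda>_. corr_bit \<rho>) =
        map_pmf (\<lambda>g. g \<circ> idx) (Pi_pmf {..<CARD('y)} undefined (\<lambda>_. corr_bit \<rho>))"
    by (rule Pi_pmf_bij_betw) (use bij in auto)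
  then show ?thesis unfolding D_rho_def perturbed_def
    by (simp add: pmf.map_comp o_def lt)
qed


lemma card_as_sum: "real (card {z::'a::finite. P z}) = (\<Sum>z\<in>UNIV. if P z then 1 else 0)"
proof -
  have "(\<Sum>z\<in>{z\<in>UNIV. P z}. (1::real)) = (\<Sum>z\<in>UNIV. if P z then 1 else 0)"
    by (rule sum.inter_filter) simp
  then show ?thesis by simp
qed

lemma pow_ineq:
  fixes t a :: real assumes "0 < t" "t < 1" "0 \<le> a" "a \<le> 1"
  shows "t powr a + t powr (1 - a) \<le> 1 + t"
proof -
  have "t powr a \<le> 1" using assms by (intro powr_le1) auto
  moreover have "t powr (1-a) \<le> 1" using assms by (intro powr_le1) auto
  ultimately have "0 \<le> (1 - t powr a) * (1 - t powr (1-a))" by simp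
  moreover have "t powr a * t powr (1-a) = t" using assms by (simp add: powr_add[symmetric])
  ultimately show ?thesis by (simp add: algebra_simps)
qed

lemma final_eq:
  fixes \<delta> m :: real assumes "0 < \<delta>" "\<delta> < 1/2"
  shows "(\<delta>/(1-\<delta>)) powr (-\<delta>*m) * (1 + \<delta>/(1-\<delta>)) powr m = 2 powr (bin_entropy \<delta> * m)"
proof -
  have p1: "1 + \<delta>/(1-\<delta>) = 1/(1-\<delta>)" using assms by (simp add: field_simps)
  have l1: "ln (\<delta>/(1-\<delta>)) = ln \<delta> - ln (1-\<delta>)" using assms by (simp add: ln_div)
  have l2: "ln (1/(1-\<delta>)) = - ln (1-\<delta>)" using assms by (simp add: ln_div)
  have h: "bin_entropy \<delta> * ln 2 = - \<delta> * ln \<delta> - (1-\<delta>) * ln (1-\<delta>)"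
    unfolding bin_entropy_def log_def by (simp add: field_simps)
  have "(\<delta>/(1-\<delta>)) powr (-\<delta>*m) * (1 + \<delta>/(1-\<delta>)) powr m
        = exp ((-\<delta>*m) * ln (\<delta>/(1-\<delta>)) + m * ln (1/(1-\<delta>)))"
    using assms apply (simp add: p1 powr_def)
    apply (subst exp_add[symmetric]) apply simp done
  also have "\<dots> = exp ((bin_entropy \<delta> * ln 2) * m)"
    unfolding l1 l2 h by (simp add: algebra_simps)
  also have "\<dots> = 2 powr (bin_entropy \<delta> * m)"
    by (simp add: powr_def algebra_simps)
  finally show ?thesis .
qed

lemma count_bound:
  fixes w :: "'x::finite \<times> 'y::finite \<Rightarrow> bool" and \<delta> :: real
  assumes d: "0 < \<delta>" "\<delta> < 1/2"
  shows "real (card {h :: 'y \<Rightarrow> bool. frac_dist w (\<lambda>(x,y). h y) \<le> \<delta>})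
          \<le> 2 powr (bin_entropy \<delta> * CARD('y))"
proof -
  define nX where "nX = real CARD('x)"
  define m where "m = real CARD('y)"
  have nX: "nX > 0" unfolding nX_def by simp
  have m: "m > 0" unfolding m_def by simp
  define a where "a y b = (\<Sum>x\<in>UNIV. if w (x,y) \<noteq> b then 1 else 0) / nX" for y b
  have fd: "frac_dist w (\<lambda>(x,y). h y) = (\<Sum>y\<in>UNIV. a y (h y)) / m" for h :: "'y \<Rightarrow> bool"
  proof -
    have "real (card {z. w z \<noteq> (\<lambda>(x,y). h y) z}) = (\<Sum>z\<in>UNIV. if w z \<noteq> (\<lambda>(x,y). h y) z then 1 else 0)"
      by (rule card_as_sum)
    also have "\<dots> = (\<Sum>z\<in>UNIV \<times> UNIV. if w z \<noteq> (\<lambda>(x,y). h y) z then 1 else 0)"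
      by (simp add: UNIV_Times_UNIV)
    also have "\<dots> = (\<Sum>x\<in>UNIV. \<Sum>y\<in>UNIV. if w (x,y) \<noteq> h y then 1 else 0)"
      by (subst sum.cartesian_product) (simp add: case_prod_beta)
    also have "\<dots> = (\<Sum>y\<in>UNIV. \<Sum>x\<in>UNIV. if w (x,y) \<noteq> h y then 1 else 0)"
      by (rule sum.swap)
    also have "\<dots> = nX * (\<Sum>y\<in>UNIV. a y (h y))"
      unfolding a_def sum_divide_distrib[symmetric] using nX by simp
    finally have c: "real (card {z. w z \<noteq> (\<lambda>(x,y). h y) z}) = nX * (\<Sum>y\<in>UNIV. a y (h y))" .
    have "real (card (UNIV :: ('x \<times> 'y) set)) = nX * m"
      unfolding nX_def m_def by (simp add: UNIV_Times_UNIV[symmetric] card_cartesian_product del: UNIV_Times_UNIV)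
    then show ?thesis unfolding frac_dist_def c using nX by simp
  qed
  have a_nn: "a y b \<ge> 0" for y b unfolding a_def using nX by (intro divide_nonneg_pos sum_nonneg) auto
  have a_sum: "a y True + a y False = 1" for y
  proof -
    have "a y True + a y False = (\<Sum>x\<in>UNIV. (if w (x,y) \<noteq> True then 1 else 0) + (if w (x,y) \<noteq> False then 1 else 0)) / nX"
      unfolding a_def by (simp add: sum.distrib add_divide_distrib)
    also have "\<dots> = (\<Sum>x\<in>(UNIV::'x set). 1) / nX" by (intro arg_cong2[where f="(/)"] sum.cong) auto
    also have "\<dots> = 1" using nX by (simp add: nX_def)
    finally show ?thesis .
  qed
  define t where "t = \<delta>/(1-\<delta>)"
  have t: "0 < t" "t < 1" unfolding t_def using d by (auto simp: field_simps)
  define W where "W h = t powr ((\<Sum>y\<in>UNIV. a y (h y)) - \<delta> * m)" for h :: "'y \<Rightarrow> bool"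
  let ?S = "{h :: 'y \<Rightarrow> bool. frac_dist w (\<lambda>(x,y). h y) \<le> \<delta>}"
  have W1: "1 \<le> W h" if "h \<in> ?S" for h
  proof -
    have e: "(\<Sum>y\<in>UNIV. a y (h y)) \<le> \<delta> * m" using that m by (simp add: fd divide_le_eq)
    have "1 \<le> (1/t) powr (\<delta> * m - (\<Sum>y\<in>UNIV. a y (h y)))"
      using t e by (intro ge_one_powr_ge_zero) auto
    also have "\<dots> = 1 / t powr (\<delta> * m - (\<Sum>y\<in>UNIV. a y (h y)))"
      using t by (simp add: powr_divide)
    also have "\<dots> = t powr (- (\<delta> * m - (\<Sum>y\<in>UNIV. a y (h y))))"
      by (rule powr_minus_divide[symmetric])
    also have "\<dots> = W h" unfolding W_def by simp
    finally show ?thesis .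
  qed
  have "real (card ?S) = (\<Sum>h\<in>?S. 1)" by simp
  also have "\<dots> \<le> (\<Sum>h\<in>?S. W h)" by (rule sum_mono) (use W1 in auto)
  also have "\<dots> \<le> (\<Sum>h\<in>UNIV. W h)" by (rule sum_mono2) (auto simp: W_def)
  also have "\<dots> = t powr (-\<delta>*m) * (\<Sum>h\<in>UNIV. \<Prod>y\<in>UNIV. t powr a y (h y))"
    unfolding W_def using t by (simp add: powr_diff powr_sum sum_distrib_left divide_inverse powr_minus mult.commute)
  also have "(\<Sum>h\<in>UNIV. \<Prod>y\<in>UNIV. t powr a y (h y)) = (\<Prod>y\<in>UNIV. \<Sum>b\<in>UNIV. t powr a y b)"
    by (subst prod_sum_PiE) (auto simp: PiE_UNIV_domain)
  also have "\<dots> \<le> (\<Prod>y\<in>(UNIV::'y set). 1 + t)"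
  proof (rule prod_mono, intro ballI conjI)
    fix y :: 'y
    show "0 \<le> (\<Sum>b\<in>UNIV. t powr a y b)" by (auto intro: sum_nonneg)
    have "a y False = 1 - a y True" using a_sum[of y] by simp
    moreover have "a y True \<le> 1" using a_sum[of y] a_nn[of y False] by simp
    ultimately show "(\<Sum>b\<in>UNIV. t powr a y b) \<le> 1 + t"
      using pow_ineq[OF t a_nn[of y True]] by (simp add: UNIV_bool)
  qed
  also have "(\<Prod>y\<in>(UNIV::'y set). 1 + t) = (1 + t) powr m"
    unfolding m_def using t by (simp add: powr_realpow)
  finally have "real (card ?S) \<le> t powr (-\<delta>*m) * (1 + t) powr m"
    using t by (simp add: mult_left_mono)
  also have "\<dots> = 2 powr (bin_entropy \<delta> * m)" unfolding t_def by (rule final_eq[OF d])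
  finally show ?thesis unfolding m_def .
qed


lemma minent_generic:
  fixes D :: "'c pmf" and q \<pi> :: "'c \<Rightarrow> ('x::finite \<times> 'y::finite \<Rightarrow> bool)" and d :: bool
  assumes supp: "\<And>c. c \<in> set_pmf D \<Longrightarrow> frac_dist (q c) (\<pi> c) \<le> \<delta>"
    and dl: "0 < \<delta>" "\<delta> < 1/2"
    and marg: "map_pmf \<pi> D = map_pmf (\<lambda>h. \<lambda>(x,y). h y) (Pi_pmf (UNIV::'y set) d (\<lambda>_. bernoulli_pmf (1/2)))"
  shows "(1 - bin_entropy \<delta>) * real CARD('y) \<le> min_entropy (map_pmf q D)"
  unfolding min_entropy_def
proof (rule cINF_greatest)
  show "set_pmf (map_pmf q D) \<noteq> {}" by (rule set_pmf_not_empty)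
  fix w assume w: "w \<in> set_pmf (map_pmf q D)"
  define m where "m = real CARD('y)"
  let ?U = "Pi_pmf (UNIV::'y set) d (\<lambda>_. bernoulli_pmf (1/2))"
  let ?emb = "\<lambda>(h::'y \<Rightarrow> bool). \<lambda>(x::'x,y). h y"
  let ?B = "{f. frac_dist w f \<le> \<delta>}"
  let ?S = "{h :: 'y \<Rightarrow> bool. frac_dist w (\<lambda>(x,y). h y) \<le> \<delta>}"
  have "pmf (map_pmf q D) w = measure D (q -` {w})" by (simp add: pmf_map)
  also have "\<dots> = measure D (q -` {w} \<inter> set_pmf D)" by (simp add: measure_Int_set_pmf)
  also have "\<dots> \<le> measure D (\<pi> -` ?B)"
  proof (rule measure_pmf.finite_measure_mono)
    show "q -` {w} \<inter> set_pmf D \<subseteq> \<pi> -` ?B"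
    proof
      fix c assume "c \<in> q -` {w} \<inter> set_pmf D"
      then have "q c = w" "c \<in> set_pmf D" by auto
      then show "c \<in> \<pi> -` ?B" using supp[of c] by simp
    qed
  qed simp
  also have "\<dots> = measure (map_pmf \<pi> D) ?B" by (simp add: measure_map_pmf)
  also have "\<dots> = measure ?U (?emb -` ?B)" unfolding marg by (simp add: measure_map_pmf)
  also have "?emb -` ?B = ?S" by auto
  also have "measure ?U ?S = (\<Sum>h\<in>?S. pmf ?U h)" by (rule measure_measure_pmf_finite) simp
  also have "\<dots> = (\<Sum>h\<in>?S. (1/2) ^ CARD('y))" by (simp add: pmf_Pi)
  also have "\<dots> = real (card ?S) * (1/2) ^ CARD('y)" by simp
  also have "\<dots> \<le> 2 powr (bin_entropy \<delta> * m) * (1/2) ^ CARD('y)"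
    unfolding m_def by (rule mult_right_mono[OF count_bound[OF dl]]) simp
  also have "\<dots> = 2 powr (bin_entropy \<delta> * m - m)"
  proof -
    have "(1/2::real) ^ CARD('y) = 1 / 2 powr m" unfolding m_def
      by (simp add: power_one_over powr_realpow)
    then show ?thesis by (simp add: powr_diff)
  qed
  finally have le: "pmf (map_pmf q D) w \<le> 2 powr (bin_entropy \<delta> * m - m)" .
  have pos: "0 < pmf (map_pmf q D) w" using w by (rule pmf_positive)
  have "log 2 (pmf (map_pmf q D) w) \<le> log 2 (2 powr (bin_entropy \<delta> * m - m))"
    using le pos by (subst log_le_cancel_iff) auto
  then have "log 2 (pmf (map_pmf q D) w) \<le> bin_entropy \<delta> * m - m" by simp
  then show "(1 - bin_entropy \<delta>) * real CARD('y) \<le> - log 2 (pmf (map_pmf q D) w)"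
    unfolding m_def by (simp add: algebra_simps)
qed

theorem mainTheorem5:
  fixes P :: "('x::finite \<times> 'y::finite \<Rightarrow> bool, 'x \<times> 'y \<Rightarrow> bool, 'x \<times> 'y \<Rightarrow> bool) protocol"
    and \<rho> \<delta>2 \<gamma> :: real
  assumes "0 < \<rho>" "\<rho> < 1/2" "0 < \<delta>2" "\<delta>2 < 1/2" "\<gamma> > 0"
    and "solves_Agree \<delta>2 \<gamma> \<rho> P"
  shows "\<exists>P' :: (bool list, bool list, 'x \<times> 'y \<Rightarrow> bool) protocol.
           comm P' = comm P \<and>
           solves_AD (card (UNIV :: 'y set))
             ((1 - bin_entropy \<delta>2) * real (card (UNIV :: 'y set))) \<gamma> \<rho> P'"
proof -
  obtain idx :: "'y \<Rightarrow> nat" where idx0: "bij_betw idx UNIV {0..<CARD('y)}"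
    using ex_bij_betw_finite_nat[of "UNIV :: 'y set"] by auto
  have idx: "bij_betw idx UNIV {..<CARD('y)}" using idx0 by (simp add: atLeast0LessThan)
  define conv :: "bool list \<Rightarrow> 'x \<times> 'y \<Rightarrow> bool" where "conv r = (\<lambda>(x,y). r ! idx y)" for r
  define P' where "P' = pmap conv conv P"
  have pert: "map_pmf (\<lambda>(r,s). (conv r, conv s)) (perturbed \<rho> CARD('y)) = D_rho \<rho>"
    unfolding conv_def by (rule perturbed_D[OF idx])
  have runP: "run P' r s = run P (conv r) (conv s)" for r s
    unfolding P'_def by (rule run_pmap)
  have sA: "\<And>f g. (f, g) \<in> set_pmf (D_rho \<rho>) \<Longrightarrow> frac_dist (fst (run P f g)) f \<le> \<delta>2"
   and sB: "\<And>f g. (f, g) \<in> set_pmf (D_rho \<rho>) \<Longrightarrow> frac_dist (snd (run P f g)) g \<le> \<delta>2"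
   and agr: "measure_pmf.prob (D_rho \<rho>) {(f, g). fst (run P f g) = snd (run P f g)} \<ge> \<gamma>"
    using assms(6) unfolding solves_Agree_def by auto
  have mA: "map_pmf (\<lambda>(r, s). fst (run P' r s)) (perturbed \<rho> CARD('y))
          = map_pmf (\<lambda>(f,g). fst (run P f g)) (D_rho \<rho>)"
    unfolding pert[symmetric] pmf.map_comp by (rule map_pmf_cong) (auto simp: runP)
  have mB: "map_pmf (\<lambda>(r, s). snd (run P' r s)) (perturbed \<rho> CARD('y))
          = map_pmf (\<lambda>(f,g). snd (run P f g)) (D_rho \<rho>)"
    unfolding pert[symmetric] pmf.map_comp by (rule map_pmf_cong) (auto simp: runP)
  have eA: "(1 - bin_entropy \<delta>2) * real CARD('y) \<le> min_entropy (map_pmf (\<lambda>(f,g). fst (run P f g)) (D_rho \<rho> :: (('x \<times> 'y \<Rightarrow> bool) \<times> _) pmf))"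
    by (rule minent_generic[where \<pi> = fst, OF _ assms(3,4) marg_fst]) (auto dest: sA)
  have eB: "(1 - bin_entropy \<delta>2) * real CARD('y) \<le> min_entropy (map_pmf (\<lambda>(f,g). snd (run P f g)) (D_rho \<rho> :: (('x \<times> 'y \<Rightarrow> bool) \<times> _) pmf))"
    by (rule minent_generic[where \<pi> = snd, OF _ assms(3,4) marg_snd]) (auto dest: sB)
  have "measure_pmf.prob (perturbed \<rho> CARD('y)) {(r, s). fst (run P' r s) = snd (run P' r s)}
      = measure_pmf.prob (perturbed \<rho> CARD('y)) ((\<lambda>(r,s). (conv r, conv s)) -` {(f, g). fst (run P f g) = snd (run P f g)})"
    by (rule arg_cong[where f="measure_pmf.prob (perturbed \<rho> CARD('y))"]) (auto simp: runP)
  also have "\<dots> = measure_pmf.prob (D_rho \<rho>) {(f, g). fst (run P f g) = snd (run P f g)}"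
    unfolding pert[symmetric] by (simp add: measure_map_pmf)
  finally have ag: "measure_pmf.prob (perturbed \<rho> CARD('y)) {(r, s). fst (run P' r s) = snd (run P' r s)} \<ge> \<gamma>"
    using agr by simp
  have "comm P' = comm P" unfolding P'_def by (rule comm_pmap)
  moreover have "solves_AD CARD('y) ((1 - bin_entropy \<delta>2) * real CARD('y)) \<gamma> \<rho> P'"
    unfolding solves_AD_def mA mB using eA eB ag by simp
  ultimately show ?thesis by blast
qed

end
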